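(* Let $a,b,d<0$ and $c>0$ and let $\{W_n(z)\}_{n\ge0}$ be the normalised sequence defined below. Then \[ x_\Delta^-<x_A<0<x_B\qquad\text{and}\qquad x_A<x_\Delta^+<x_B, \] and $A(x_\Delta^-)>0>A(x_\Delta^+)$. For every $n\ge1$: $(-1)^{\lceil n/2\rceil}W_n(x_A)>0$, $(-1)^nW_n(x_B)<0$, and $W_n(x_\Delta^-)<0$. Furthermore: (i) If $c\le c^-$, then $x_\Delta^+\le x_g^-\le x_g^+<0$, $(-1)^nW_n(x_g^\pm)>0$ for $n\ge1$, and \[ (-1)^nW_n(x_\Delta^+)\begin{cases}<0,&\text{if }\Delta_\Delta>\Delta_g\text{ and }n>n^+,\\ =0,&\text{if }\Delta_\Delta>\Delta_g\text{ and }n=n^+,\\ >0,&\text{otherwise.}\end{cases} \] (ii) If $c\ge c^+$, then $x_B<x_g^-$, $W_n(x_g^\pm)>0$ for $n\ge1$, and $(-1)^nW_n(x_\Delta^+)<0$ for all $n\ge2$.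
   Context: Let $a,b,c,d\in\mathbb{R}$ with $ac\ne0$, and put $A(z)=az+b$, $B(z)=cz+d$. The normalised sequence $\{W_n(z)\}_{n\ge0}$ is defined by $W_0(z)=1$, $W_1(z)=z$ and $W_n(z)=A(z)W_{n-1}(z)+B(z)W_{n-2}(z)$ for $n\ge2$. Notation (for $a,b,d<0<c$): - $\Delta_\Delta=-a^2d+abc+c^2$ (which is $>0$) and $x_\Delta^\pm=\dfrac{-ab-2c\pm2\sqrt{\Delta_\Delta}}{a^2}$ (zeros of $A(z)^2+4B(z)$). - $g(z)=(1-a)z^2-(b+c)z-d$, $\Delta_g=(b+c)^2+4d(1-a)$, $x_g^\pm=\dfrac{b+c\pm\sqrt{\Delta_g}}{2(1-a)}$ (zeros of $g$, real iff $c\le c^-$ or $c\ge c^+$). - $c^\pm=\pm2\sqrt{d(a-1)}-b$. - $x_A=-b/a$, $x_B=-d/c$, $h(z)=(2-a)z-b$, $n^+=-A(x_\Delta^+)/h(x_\Delta^+)$ (defined when $h(x_\Delta^+)\neq0$, in particular when $\Delta_\Delta>\Delta_g$). *)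

theory Defs
  imports Complex_Main
begin

fun W :: "real \<Rightarrow> real \<Rightarrow> real \<Rightarrow> real \<Rightarrow> nat \<Rightarrow> real \<Rightarrow> real" where
  "W a b c d 0 z = 1"
| "W a b c d (Suc 0) z = z"
| "W a b c d (Suc (Suc n)) z =
     (a * z + b) * W a b c d (Suc n) z + (c * z + d) * W a b c d n z"

definition DeltaD :: "real \<Rightarrow> real \<Rightarrow> real \<Rightarrow> real \<Rightarrow> real" where
  "DeltaD a b c d = - (a^2 * d) + a * b * c + c^2"

definition xDp :: "real \<Rightarrow> real \<Rightarrow> real \<Rightarrow> real \<Rightarrow> real" where
  "xDp a b c d = (- a * b - 2 * c + 2 * sqrt (DeltaD a b c d)) / a^2"

definition xDm :: "real \<Rightarrow> real \<Rightarrow> real \<Rightarrow> real \<Rightarrow> real" where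
  "xDm a b c d = (- a * b - 2 * c - 2 * sqrt (DeltaD a b c d)) / a^2"

definition Deltag :: "real \<Rightarrow> real \<Rightarrow> real \<Rightarrow> real \<Rightarrow> real" where
  "Deltag a b c d = (b + c)^2 + 4 * d * (1 - a)"

definition xgp :: "real \<Rightarrow> real \<Rightarrow> real \<Rightarrow> real \<Rightarrow> real" where
  "xgp a b c d = (b + c + sqrt (Deltag a b c d)) / (2 * (1 - a))"

definition xgm :: "real \<Rightarrow> real \<Rightarrow> real \<Rightarrow> real \<Rightarrow> real" where
  "xgm a b c d = (b + c - sqrt (Deltag a b c d)) / (2 * (1 - a))"

definition cp :: "real \<Rightarrow> real \<Rightarrow> real \<Rightarrow> real" where
  "cp a b d = 2 * sqrt (d * (a - 1)) - b"

definition cm :: "real \<Rightarrow> real \<Rightarrow> real \<Rightarrow> real" where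
  "cm a b d = - 2 * sqrt (d * (a - 1)) - b"

definition xA :: "real \<Rightarrow> real \<Rightarrow> real" where
  "xA a b = - b / a"

definition xB :: "real \<Rightarrow> real \<Rightarrow> real" where
  "xB c d = - d / c"

definition h :: "real \<Rightarrow> real \<Rightarrow> real \<Rightarrow> real" where
  "h a b z = (2 - a) * z - b"

definition nplus :: "real \<Rightarrow> real \<Rightarrow> real \<Rightarrow> real \<Rightarrow> real" where
  "nplus a b c d = - (a * xDp a b c d + b) / h a b (xDp a b c d)"

end

theory Submission
  imports Defs
begin

lemma W_double:
  assumes "a*z+b = 2*p" "c*z+d = -(p^2)"
  shows "W a b c d n z = p^n + real n * (z-p) * p^(n-1)"
  using assms
proof (induction a b c d n z rule: W.induct)
  case (3 a b c d n z)
  show ?case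
  proof (cases n)
    case 0 thus ?thesis using 3 by (simp add: algebra_simps power2_eq_square)
  next
    case (Suc k)
    have e1: "W a b c d (Suc (Suc k)) z = p^(Suc (Suc k)) + real (Suc (Suc k)) * (z-p) * p^(Suc k)" using 3 Suc by simp
    have e2: "W a b c d (Suc k) z = p^(Suc k) + real (Suc k) * (z-p) * p^k" using 3 Suc by simp
    have "W a b c d (Suc (Suc n)) z = 2*p*W a b c d (Suc n) z - p^2 * W a b c d n z"
      using 3(3,4) by simp
    also have "\<dots> = p^(Suc (Suc n)) + real (Suc (Suc n)) * (z-p) * p^(Suc n)"
      unfolding Suc e1 e2 by (simp add: algebra_simps power2_eq_square)
    finally show ?thesis by simp
  qed
qed auto

lemma W_root:
  assumes "z^2 = (a*z+b)*z + (c*z+d)"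
  shows "W a b c d n z = z^n"
  using assms
proof (induction a b c d n z rule: W.induct)
  case (3 a b c d n z)
  have "W a b c d (Suc (Suc n)) z = ((a*z+b)*z + (c*z+d)) * z^n"
    using 3 by (simp add: algebra_simps)
  also have "\<dots> = z^(Suc (Suc n))" using 3(3) by (simp add: power2_eq_square)
  finally show ?case .
qed auto

lemma W_A0:
  assumes "a*z+b = 0"
  shows "W a b c d n z = (c*z+d)^(n div 2) * z^(n mod 2)"
  using assms
proof (induction a b c d n z rule: W.induct)
  case (3 a b c d n z)
  have "Suc (Suc n) div 2 = Suc (n div 2)" "Suc (Suc n) mod 2 = n mod 2" by auto
  thus ?case using 3 by (simp del: W.simps add: W.simps(3) algebra_simps)
qed auto

lemma W_B0:
  assumes "c*z+d = 0"
  shows "W a b c d (Suc n) z = (a*z+b)^n * z"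
  using assms
proof (induction n rule: nat_less_induct)
  case (1 n)
  show ?case
  proof (cases n)
    case 0 thus ?thesis by simp
  next
    case (Suc k) thus ?thesis using 1 by simp
  qed
qed


lemma sign_pow_neg:
  fixes p x :: real
  assumes "n \<ge> 1"
  shows "(-1)^n * (p^(n-1) * x) = - ((-p)^(n-1) * x)"
proof -
  obtain k where k: "n = Suc k" using assms by (cases n) auto
  have pm: "(-p)^k = (-1)^k * p^k" by (rule power_minus)
  have "(-1)^(Suc k) * (p^k*x) = - ((-p)^k * x)" unfolding pm by simp
  thus ?thesis using k by (simp only: diff_Suc_1)
qed
lemma W_double':
  assumes "a*z+b = 2*p" "c*z+d = -(p^2)" "n \<ge> 1"
  shows "W a b c d n z = p^(n-1) * (p + real n * (z-p))"
proof -
  obtain k where k: "n = Suc k" using assms by (cases n) auto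
  have "W a b c d (Suc k) z = p^(Suc k) + real (Suc k) * (z-p) * p^k" using W_double[OF assms(1,2), of n] k by simp
  also have "\<dots> = p^k * (p + real (Suc k) * (z-p))" by (simp add: algebra_simps)
  finally show ?thesis using k by simp
qed


lemma xA_sign:
  fixes Bv z :: real
  assumes "Bv < 0" "z < 0"
  shows "(-1) ^ nat \<lceil>real n / 2\<rceil> * (Bv^(n div 2) * z^(n mod 2)) > 0"
proof (cases "even n")
  case True
  then obtain k where k: "n = 2*k" by blast
  have "\<lceil>real n / 2\<rceil> = int k" unfolding k by simp
  hence "nat \<lceil>real n / 2\<rceil> = k" by simp
  moreover have "(-1)^k * Bv^k = (-Bv)^k" by (rule power_minus[symmetric])
  moreover have "(-Bv)^k > 0" using assms by simp
  ultimately show ?thesis using k by simp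
next
  case False
  then obtain k where k: "n = 2*k+1" using oddE by blast
  have "\<lceil>real n / 2\<rceil> = int k + 1" unfolding k ceiling_eq_iff by simp
  hence "nat \<lceil>real n / 2\<rceil> = Suc k" by simp
  moreover have "n div 2 = k" "n mod 2 = 1" using k by auto
  moreover have "(-1)^k * Bv^k = (-Bv)^k" by (rule power_minus[symmetric])
  moreover have "(-Bv)^k * (-z) > 0" using assms by (intro mult_pos_pos) auto
  ultimately show ?thesis by (simp add: algebra_simps)
qed

lemma g_root:
  fixes a b c d t :: real
  assumes "t^2 = (b+c)^2 + 4*d*(1-a)" "a < 1"
  defines "z \<equiv> (b+c+t)/(2*(1-a))"
  shows "z^2 = (a*z+b)*z + (c*z+d)"
proof -
  have zz: "2*(1-a)*z = b+c+t" unfolding z_def using assms(2) by simp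
  have "4*(1-a)*(z^2 - ((a*z+b)*z + (c*z+d))) = (2*(1-a)*z)^2 - 2*(b+c)*(2*(1-a)*z) - 4*d*(1-a)"
    by (simp add: algebra_simps power2_eq_square)
  also have "\<dots> = 0" unfolding zz using assms(1) by (simp add: algebra_simps power2_eq_square)
  finally show ?thesis using assms(2) by simp
qed


theorem lemma4p1:
  fixes a b c d :: real
  assumes "a < 0" "b < 0" "d < 0" "0 < c"
  shows "xDm a b c d < xA a b \<and> xA a b < 0 \<and> 0 < xB c d
    \<and> xA a b < xDp a b c d \<and> xDp a b c d < xB c d
    \<and> a * xDm a b c d + b > 0 \<and> 0 > a * xDp a b c d + b
    \<and> (\<forall>n\<ge>1. (-1) ^ nat \<lceil>real n / 2\<rceil> * W a b c d n (xA a b) > 0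
              \<and> (-1) ^ n * W a b c d n (xB c d) < 0
              \<and> W a b c d n (xDm a b c d) < 0)
    \<and> (c \<le> cm a b d \<longrightarrow>
          xDp a b c d \<le> xgm a b c d \<and> xgm a b c d \<le> xgp a b c d \<and> xgp a b c d < 0
        \<and> (\<forall>n\<ge>1. (-1) ^ n * W a b c d n (xgm a b c d) > 0
                  \<and> (-1) ^ n * W a b c d n (xgp a b c d) > 0)
        \<and> (\<forall>n\<ge>1.
             (DeltaD a b c d > Deltag a b c d \<and> real n > nplus a b c d
                \<longrightarrow> (-1) ^ n * W a b c d n (xDp a b c d) < 0)
           \<and> (DeltaD a b c d > Deltag a b c d \<and> real n = nplus a b c d
                \<longrightarrow> (-1) ^ n * W a b c d n (xDp a b c d) = 0)
           \<and> (\<not> (DeltaD a b c d > Deltag a b c d \<and> real n \<ge> nplus a b c d)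
                \<longrightarrow> (-1) ^ n * W a b c d n (xDp a b c d) > 0)))
    \<and> (c \<ge> cp a b d \<longrightarrow>
          xB c d < xgm a b c d
        \<and> (\<forall>n\<ge>1. W a b c d n (xgm a b c d) > 0 \<and> W a b c d n (xgp a b c d) > 0)
        \<and> (\<forall>n\<ge>2. (-1) ^ n * W a b c d n (xDp a b c d) < 0))"
proof -
  note a = assms(1) and b = assms(2) and d = assms(3) and c = assms(4)
  define D where "D = DeltaD a b c d"
  define s where "s = sqrt D"
  define X where "X = xDp a b c d"
  define Y where "Y = xDm a b c d"
  have a2: "a^2 > 0" using a by simp
  have "a^2*d < 0" using a2 d by (simp add: mult_pos_neg)
  moreover have "a*b*c > 0" using a b c by (simp add: mult_neg_neg)
  ultimately have Dpos: "D > c^2" unfolding D_def DeltaD_def by simp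
  have s2: "s^2 = D" unfolding s_def using Dpos
    by (metis order.strict_trans1 real_sqrt_pow2 zero_le_power2 less_imp_le)
  have sc: "s > c" unfolding s_def using Dpos c
    by (metis abs_of_pos real_less_rsqrt)
  have xDp_eq: "X = (- a * b - 2 * c + 2 * s) / a^2" unfolding X_def xDp_def s_def D_def ..
  have xDm_eq: "Y = (- a * b - 2 * c - 2 * s) / a^2" unfolding Y_def xDm_def s_def D_def ..
  have xA: "xA a b < 0" unfolding xA_def using a b by (simp add: divide_neg_neg)
  have xB: "xB c d > 0" unfolding xB_def using c d by (simp add: divide_neg_pos)
  have xA_eq: "xA a b = (-a*b)/a^2" unfolding xA_def using a by (simp add: power2_eq_square)
  have xB_eq: "xB c d = (- (a^2)*d/c)/a^2" unfolding xB_def using a by simp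
  have 1: "Y < xA a b"
    unfolding xDm_eq xA_eq using a2 sc c by (intro divide_strict_right_mono) auto
  have 2: "xA a b < X"
    unfolding xDp_eq xA_eq using a2 sc c by (intro divide_strict_right_mono) auto
  have "c*(- a * b - 2 * c + 2 * s) - (- (a^2)*d) = - ((s-c)^2)"
    using s2 unfolding D_def DeltaD_def by (simp add: algebra_simps power2_eq_square)
  also have "\<dots> < 0" using sc by simp
  finally have "c*(- a * b - 2 * c + 2 * s) < - (a^2)*d" by simp
  hence "(- a * b - 2 * c + 2 * s) < - (a^2)*d/c" using c by (simp add: field_simps)
  hence 3: "X < xB c d"
    unfolding xDp_eq xB_eq using a2 by (intro divide_strict_right_mono) auto
  define pM where "pM = (-s-c)/a"
  define pP where "pP = (s-c)/a"
  have pm: "a*Y+b = 2*pM" unfolding xDm_eq pM_def using a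
    by (simp add: field_simps power2_eq_square)
  have pp: "a*X+b = 2*pP" unfolding xDp_eq pP_def using a
    by (simp add: field_simps power2_eq_square)
  have eDm: "a^2 * Y = - a * b - 2 * c - 2 * s" unfolding xDm_eq using a by simp
  have eDp: "a^2 * X = - a * b - 2 * c + 2 * s" unfolding xDp_eq using a by simp
  have s2e: "s^2 = c^2 + a*b*c - a^2*d" using s2 unfolding D_def DeltaD_def by simp
  have "a^2*(c*Y+d) = c*(a^2*Y) + a^2*d" by (simp add: algebra_simps)
  also have "\<dots> = - ((s+c)^2)" unfolding eDm using s2e by (simp add: algebra_simps power2_eq_square)
  finally have "c*Y+d = - ((s+c)^2)/a^2" using a by (simp add: field_simps)
  moreover have "pM^2 = (s+c)^2/a^2"
  proof -
    have "-s-c = -(s+c)" by simp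
    hence "pM^2 = (-(s+c))^2/a^2" unfolding pM_def by (simp only: power_divide)
    thus ?thesis by (simp only: power2_minus)
  qed
  ultimately have bm: "c*Y+d = -(pM^2)" by simp
  have "a^2*(c*X+d) = c*(a^2*X) + a^2*d" by (simp add: algebra_simps)
  also have "\<dots> = - ((s-c)^2)" unfolding eDp using s2e by (simp add: algebra_simps power2_eq_square)
  finally have "c*X+d = - ((s-c)^2)/a^2" using a by (simp add: field_simps)
  hence bp: "c*X+d = -(pP^2)" unfolding pP_def by (simp add: power_divide)
  have pmpos: "pM > 0" unfolding pM_def using a sc c by (simp add: divide_neg_neg)
  have ppneg: "pP < 0" unfolding pP_def using a sc c by (simp add: divide_pos_neg)
  have AYpos: "a * Y + b > 0" using pm pmpos by simp
  have AXneg: "0 > a * X + b" using pp ppneg by simp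
  have WxA: "(-1) ^ nat \<lceil>real n / 2\<rceil> * W a b c d n (xA a b) > 0" for n
  proof -
    have "a * xA a b + b = 0" unfolding xA_def using a by simp
    note e = W_A0[OF this, of c d n]
    have "c * xA a b < 0" using c xA by (simp add: mult_pos_neg)
    hence "c * xA a b + d < 0" using d by simp
    from xA_sign[OF this xA, of n] show ?thesis unfolding e .
  qed
  have WxB: "(-1) ^ n * W a b c d n (xB c d) < 0" if n: "n \<ge> 1" for n
  proof -
    obtain k where k: "n = Suc k" using n by (cases n) auto
    have "c * xB c d + d = 0" unfolding xB_def using c by simp
    note e = W_B0[OF this, of a b k]
    have "a * xB c d < 0" using a xB by (simp add: mult_neg_pos)
    hence Aneg: "a * xB c d + b < 0" using b by simp
    have "(-1)^n * W a b c d n (xB c d) = - ((-(a * xB c d + b))^(n-1) * xB c d)"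
      using sign_pow_neg[OF n, of "a * xB c d + b" "xB c d"] e k by simp
    moreover have "(-(a * xB c d + b))^(n-1) * xB c d > 0" using Aneg xB by (intro mult_pos_pos) auto
    ultimately show ?thesis by simp
  qed
  have WxDm: "W a b c d n Y < 0" if n: "n \<ge> 1" for n
  proof -
    have e: "W a b c d n Y = pM^(n-1) * (pM + real n * (Y - pM))"
      using W_double'[OF pm bm n] .
    have "Y < 0" using 1 xA by simp
    hence neg: "Y - pM < 0" using pmpos by simp
    have "real n * (Y - pM) \<le> 1 * (Y - pM)" using n neg by (intro mult_right_mono_neg) auto
    hence "pM + real n * (Y - pM) < 0" using \<open>Y < 0\<close> by simp
    moreover have "pM^(n-1) > 0" using pmpos by simp
    ultimately show ?thesis unfolding e by (simp add: mult_pos_neg)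
  qed
  define q where "q = X - pP"
  define E where "E = DeltaD a b c d - Deltag a b c d"
  have Eeq: "E = - d*(2-a)^2 - b*c*(2-a) - b^2" unfolding E_def DeltaD_def Deltag_def
    by (simp add: algebra_simps power2_eq_square)
  have aq: "a^2 * q = (2-a)*s - (a*b + (2-a)*c)"
  proof -
    have "a^2 * q = a^2*X - a*(a*pP)" unfolding q_def by (simp add: algebra_simps power2_eq_square)
    also have "a*pP = s - c" unfolding pP_def using a by simp
    finally show ?thesis unfolding eDp by (simp add: algebra_simps)
  qed
  have T: "a*b + (2-a)*c > 0" using a b c by (simp add: mult_neg_neg add_pos_pos)
  have spos: "s > 0" using sc c by simp
  have "((2-a)*s - (a*b + (2-a)*c)) * ((2-a)*s + (a*b + (2-a)*c)) = (2-a)^2 * s^2 - (a*b + (2-a)*c)^2"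
    by (simp add: algebra_simps power2_eq_square)
  also have "\<dots> = a^2 * E" unfolding s2e Eeq by (simp add: algebra_simps power2_eq_square)
  finally have prodE: "((2-a)*s - (a*b + (2-a)*c)) * ((2-a)*s + (a*b + (2-a)*c)) = a^2 * E" .
  have plus_pos: "(2-a)*s + (a*b + (2-a)*c) > 0" using T spos a by (simp add: add_pos_pos)
  have qpos_iff: "q > 0 \<longleftrightarrow> E > 0"
  proof -
    have "q > 0 \<longleftrightarrow> a^2*q > 0" using a2 by (simp add: zero_less_mult_iff)
    also have "\<dots> \<longleftrightarrow> a^2*q * ((2-a)*s + (a*b + (2-a)*c)) > 0" using plus_pos by (simp add: zero_less_mult_iff)
    also have "\<dots> \<longleftrightarrow> a^2*E > 0" using prodE aq by simp
    also have "\<dots> \<longleftrightarrow> E > 0" using a2 by (simp add: zero_less_mult_iff)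
    finally show ?thesis .
  qed
  have hX: "h a b X = 2*q" unfolding h_def q_def using pp by (simp add: algebra_simps)
  have np: "nplus a b c d = - pP / q" unfolding nplus_def X_def[symmetric] hX pp by simp
  have WX: "(-1)^n * W a b c d n X = - ((-pP)^(n-1) * (pP + real n * q))" if n: "n \<ge> 1" for n
    using sign_pow_neg[OF n, of pP "pP + real n * q"] W_double'[OF pp bp n] unfolding q_def by simp
  have mpP: "(-pP)^(n-1) > 0" for n using ppneg by simp
  have br1: "(-1) ^ n * W a b c d n X < 0" if n: "n \<ge> 1" and "E > 0" "real n > nplus a b c d" for n
  proof -
    have qp: "q > 0" using qpos_iff \<open>E > 0\<close> by simp
    have "real n > - pP / q" using that np by simp
    hence "real n * q > - pP" using qp by (simp add: field_simps)
    hence "pP + real n * q > 0" by simp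
    thus ?thesis unfolding WX[OF n] using mpP[of n] by (simp add: mult_pos_pos)
  qed
  have br2: "(-1) ^ n * W a b c d n X = 0" if n: "n \<ge> 1" and "E > 0" "real n = nplus a b c d" for n
  proof -
    have qp: "q > 0" using qpos_iff \<open>E > 0\<close> by simp
    have "real n = - pP / q" using that np by simp
    hence "real n * q = - pP" using qp by (simp add: field_simps)
    hence "pP + real n * q = 0" by simp
    thus ?thesis unfolding WX[OF n] by simp
  qed
  have br3: "(-1) ^ n * W a b c d n X > 0" if n: "n \<ge> 1" and nn: "\<not> (E > 0 \<and> real n \<ge> nplus a b c d)" for n
  proof -
    have "pP + real n * q < 0"
    proof (cases "E > 0")
      case True
      have qp: "q > 0" using qpos_iff True by simp
      have "real n < - pP / q" using nn True np by simp
      hence "real n * q < - pP" using qp by (simp add: field_simps)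
      thus ?thesis by simp
    next
      case False
      hence "q \<le> 0" using qpos_iff by simp
      hence "real n * q \<le> 0" by (simp add: mult_nonneg_nonpos)
      thus ?thesis using ppneg by simp
    qed
    thus ?thesis unfolding WX[OF n] using mpP[of n] by (simp add: mult_pos_neg)
  qed
  define r where "r = sqrt (d*(a-1))"
  have dv: "d*(a-1) > 0" using a d by (simp add: mult_neg_neg)
  have r2: "r^2 = d*(a-1)" unfolding r_def using dv by simp
  have rpos: "r > 0" unfolding r_def using dv by simp
  define Dg where "Dg = Deltag a b c d"
  define sg where "sg = sqrt Dg"
  have Dge: "Dg = (b+c)^2 - 4*r^2" unfolding Dg_def Deltag_def r2 by (simp add: algebra_simps)
  have xgp_eq: "xgp a b c d = (b+c+sg)/(2*(1-a))" unfolding xgp_def sg_def Dg_def ..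
  have xgm_eq: "xgm a b c d = (b+c+(-sg))/(2*(1-a))" unfolding xgm_def sg_def Dg_def by simp
  have v: "1 - a > 0" using a by simp
  have gm_le: "xgm a b c d \<le> xgp a b c d" if "Dg \<ge> 0"
  proof -
    have "sg \<ge> 0" unfolding sg_def using that by simp
    thus ?thesis unfolding xgp_eq xgm_eq using v by (intro divide_right_mono) auto
  qed
  have groot: "z^2 = (a*z+b)*z + (c*z+d)" if "Dg \<ge> 0" "z = xgm a b c d \<or> z = xgp a b c d" for z
  proof -
    have "sg^2 = (b+c)^2 + 4*d*(1-a)" unfolding sg_def using that(1) unfolding Dg_def Deltag_def by simp
    moreover have "(-sg)^2 = (b+c)^2 + 4*d*(1-a)" using calculation by simp
    ultimately show ?thesis using that(2) g_root[of sg b c d a] g_root[of "-sg" b c d a] a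
      unfolding xgm_eq xgp_eq by auto
  qed
  have Wg: "W a b c d n z = z^n" if "Dg \<ge> 0" "z = xgm a b c d \<or> z = xgp a b c d" for n z
    using W_root[OF groot[OF that]] .
  have parti: "xDp a b c d \<le> xgm a b c d \<and> xgm a b c d \<le> xgp a b c d \<and> xgp a b c d < 0
        \<and> (\<forall>n\<ge>1. (-1) ^ n * W a b c d n (xgm a b c d) > 0
                  \<and> (-1) ^ n * W a b c d n (xgp a b c d) > 0)" if ci: "c \<le> cm a b d"
  proof -
    have w: "b + c \<le> -2*r" using ci unfolding cm_def r_def by simp
    have "(2*r)^2 \<le> (-(b+c))^2" using w rpos by (intro power_mono) auto
    moreover have "(-(b+c))^2 = (b+c)^2" by (rule power2_minus)
    ultimately have Dg0: "Dg \<ge> 0" unfolding Dge by (simp add: power_mult_distrib)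
    have "Dg < (b+c)^2" unfolding Dge using rpos by simp
    hence "sg < \<bar>b+c\<bar>" unfolding sg_def using Dg0 by (metis real_sqrt_abs real_sqrt_less_mono)
    hence "b+c+sg < 0" using w rpos by simp
    hence gp: "xgp a b c d < 0" unfolding xgp_eq using v by (simp add: divide_neg_pos)
    have gmp: "xgm a b c d \<le> xgp a b c d" using gm_le Dg0 .
    define z where "z = xgm a b c d"
    have z0: "z < 0" using gp gmp z_def by simp
    have zr: "z^2 = (a*z+b)*z + (c*z+d)" using groot[OF Dg0] z_def by simp
    have "c*z < 0" using c z0 by (simp add: mult_pos_neg)
    hence Bn: "c*z+d < 0" using d by simp
    have "(a*z+b)*z > 0" using zr Bn by (smt (verit) zero_le_power2)
    hence "a*z+b < 0" using z0 by (simp add: zero_less_mult_iff)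
    hence "a*z < -b" by simp
    hence zA: "z > xA a b" unfolding xA_def using a by (simp add: field_simps)
    have fac: "a^2*a^2*((z-Y)*(z-X)) = a^2*((a*z+b)^2 + 4*(c*z+d))"
    proof -
      have "a^2*a^2*((z-Y)*(z-X)) = (a^2*z - a^2*Y)*(a^2*z - a^2*X)" by (simp add: algebra_simps)
      also have "\<dots> = (a^2*z + a*b + 2*c)^2 - 4*s^2" unfolding eDm eDp by (simp add: algebra_simps power2_eq_square)
      also have "\<dots> = a^2*((a*z+b)^2 + 4*(c*z+d))" unfolding s2e by (simp add: algebra_simps power2_eq_square)
      finally show ?thesis .
    qed
    have "(a*z+b)^2 + 4*(c*z+d) = (2*z - (a*z+b))^2" using zr by (simp add: algebra_simps power2_eq_square)
    hence "(a*z+b)^2 + 4*(c*z+d) \<ge> 0" by simp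
    hence "a^2*a^2*((z-Y)*(z-X)) \<ge> 0" unfolding fac using a2 by simp
    hence "(z-Y)*(z-X) \<ge> 0" using a2 by (simp add: zero_le_mult_iff)
    moreover have "z - Y > 0" using zA 1 by simp
    ultimately have "z \<ge> X" by (simp add: zero_le_mult_iff)
    moreover have "(-1) ^ n * W a b c d n zz > 0" if "zz = xgm a b c d \<or> zz = xgp a b c d" for n zz
    proof -
      have "zz < 0" using that gp gmp by auto
      have "(-1)^n * W a b c d n zz = (-zz)^n" unfolding Wg[OF Dg0 that] by (rule power_minus[symmetric])
      thus ?thesis using \<open>zz < 0\<close> by simp
    qed
    ultimately show ?thesis using gp gmp z_def X_def by auto
  qed
  have partii: "xB c d < xgm a b c d
        \<and> (\<forall>n\<ge>1. W a b c d n (xgm a b c d) > 0 \<and> W a b c d n (xgp a b c d) > 0)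
        \<and> (\<forall>n\<ge>2. (-1) ^ n * W a b c d n X < 0)" if ci: "c \<ge> cp a b d"
  proof -
    define v where "v = 1 - a"
    have vpos: "v > 1" unfolding v_def using a by simp
    have r2v: "r^2 = - d*v" unfolding v_def r2 by (simp add: algebra_simps)
    have w: "b + c \<ge> 2*r" using ci unfolding cp_def r_def by simp
    have "(2*r)^2 \<le> (b+c)^2" using w rpos by (intro power_mono) auto
    hence Dg0: "Dg \<ge> 0" unfolding Dge by (simp add: power_mult_distrib)
    have sg0: "sg \<ge> 0" unfolding sg_def using Dg0 by simp
    have sg2: "sg^2 = Dg" unfolding sg_def using Dg0 by simp
    define K where "K = c*(b+c) + 2*d*v"
    have "c \<ge> b + c" using b by simp
    hence "c*(b+c) \<ge> (b+c)*(b+c)" using w rpos by (intro mult_right_mono) auto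
    moreover have "(b+c)*(b+c) \<ge> 4*r^2" using \<open>(2*r)^2 \<le> (b+c)^2\<close> by (simp add: power2_eq_square)
    ultimately have "K \<ge> 2*r^2" unfolding K_def using r2v by simp
    moreover have "r^2 > 0" using rpos by simp
    ultimately have Kpos: "K > 0" by linarith
    have Dgv: "Dg = (b+c)^2 + 4*d*v" unfolding Dg_def Deltag_def v_def by simp
    have "K^2 - (c*sg)^2 = (c*(b+c) + 2*d*v)^2 - c^2*((b+c)^2 + 4*d*v)"
      unfolding K_def power_mult_distrib sg2 Dgv ..
    also have "\<dots> = 4*d*v*(c*b + d*v)" by (simp add: algebra_simps power2_eq_square)
    finally have "K^2 - (c*sg)^2 = 4*d*v*(c*b + d*v)" .
    moreover have "d*v < 0" using d vpos by (simp add: mult_neg_pos)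
    moreover have "c*b + d*v < 0" using \<open>d*v < 0\<close> b c by (simp add: mult_pos_neg add_neg_neg)
    ultimately have "K^2 - (c*sg)^2 > 0"
    proof -
      assume e: "K^2 - (c*sg)^2 = 4*d*v*(c*b + d*v)" and n1: "d*v < 0" and n2: "c*b + d*v < 0"
      have "(d*v)*(c*b + d*v) > 0" using n1 n2 by (rule mult_neg_neg)
      thus ?thesis unfolding e by (simp add: mult.assoc)
    qed
    hence "(c*sg)^2 < K^2" by simp
    hence csK: "c*sg < K" by (rule power_less_imp_less_base) (use Kpos in linarith)
    have xgmv: "xgm a b c d = (b+c-sg)/(2*v)" unfolding xgm_eq v_def by simp
    have "xgm a b c d - xB c d = (K - c*sg)/(2*v*c)"
      unfolding xgmv xB_def K_def using c vpos by (simp add: field_simps)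
    moreover have "(K - c*sg)/(2*v*c) > 0" using csK vpos c by simp
    ultimately have gB: "xB c d < xgm a b c d" by simp
    have gmp: "xgm a b c d \<le> xgp a b c d" using gm_le Dg0 .
    have Wpos: "W a b c d n zz > 0" if "zz = xgm a b c d \<or> zz = xgp a b c d" for n zz
    proof -
      have "zz > 0" using that gmp gB xB by auto
      thus ?thesis unfolding Wg[OF Dg0 that] by simp
    qed
    define u where "u = 2 - a"
    have "v*E - (r*u - b*v)^2 = -b*v*u*(c - 2*r + b)"
    proof -
      have "v*E - (r*u - b*v)^2 = v*E - (r^2*u^2 - 2*r*u*b*v + b^2*v^2)" by (simp add: algebra_simps power2_eq_square)
      also have "\<dots> = -b*v*u*(c - 2*r + b)" unfolding r2v Eeq u_def v_def by (simp add: algebra_simps power2_eq_square)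
      finally show ?thesis .
    qed
    moreover have "-b*v*u*(c - 2*r + b) \<ge> 0" using b vpos w unfolding u_def using a
      by (intro mult_nonneg_nonneg) auto
    moreover have "r*u - b*v > 0"
    proof -
      have "r*u > 0" using rpos a unfolding u_def by simp
      moreover have "b*v < 0" using b vpos by (simp add: mult_neg_pos)
      ultimately show ?thesis by linarith
    qed
    hence "(r*u - b*v)^2 > 0" by simp
    ultimately have "v*E > 0" by linarith
    hence Epos: "E > 0" using vpos by (simp add: zero_less_mult_iff)
    hence qp: "q > 0" using qpos_iff by simp
    define m where "m = 4 - a"
    define T2 where "T2 = 2*a*b + m*c"
    define F where "F = - d*m^2 - b*c*m - 4*b^2"
    have apq: "a^2*(pP + 2*q) = m*s - T2"
    proof -
      have "a^2*(pP + 2*q) = a*(a*pP) + 2*(a^2*q)" by (simp add: algebra_simps power2_eq_square)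
      also have "a*pP = s - c" unfolding pP_def using a by simp
      finally show ?thesis unfolding aq m_def T2_def by (simp add: algebra_simps)
    qed
    have "(m*s - T2)*(m*s + T2) = m^2*s^2 - T2^2" by (simp add: algebra_simps power2_eq_square)
    also have "\<dots> = a^2*F" unfolding s2e F_def T2_def m_def by (simp add: algebra_simps power2_eq_square)
    finally have prodF: "(m*s - T2)*(m*s + T2) = a^2*F" .
    have "v*F - ((r*m - b*v)^2 - b^2*v) = -b*v*m*(c - 2*r + b)"
    proof -
      have "v*F - ((r*m - b*v)^2 - b^2*v) = v*F - (r^2*m^2 - 2*r*m*b*v + b^2*v^2 - b^2*v)" by (simp add: algebra_simps power2_eq_square)
      also have "\<dots> = -b*v*m*(c - 2*r + b)" unfolding r2v F_def m_def v_def by (simp add: algebra_simps power2_eq_square)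
      finally show ?thesis .
    qed
    moreover have "-b*v*m*(c - 2*r + b) \<ge> 0" using b vpos w unfolding m_def using a
      by (intro mult_nonneg_nonneg) auto
    moreover have "(r*m - b*v)^2 \<ge> (-b*v)^2"
    proof -
      have "r*m \<ge> 0" using rpos a unfolding m_def by simp
      moreover have "-b*v \<ge> 0" using b vpos by (simp add: mult_nonpos_nonneg)
      ultimately show ?thesis by (intro power_mono) auto
    qed
    moreover have "(-b*v)^2 - b^2*v = b^2*v*(v-1)" by (simp add: algebra_simps power2_eq_square)
    moreover have "b^2*v*(v-1) > 0" using b vpos by simp
    ultimately have "v*F > 0" by linarith
    hence Fpos: "F > 0" using vpos by (simp add: zero_less_mult_iff)
    have T2pos: "T2 > 0" unfolding T2_def m_def using a b c by (simp add: mult_neg_neg add_pos_pos)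
    have "m*s + T2 > 0" using T2pos spos a unfolding m_def by (simp add: add_pos_pos)
    moreover have "(m*s - T2)*(m*s + T2) > 0" unfolding prodF using Fpos a2 by simp
    ultimately have "m*s - T2 > 0" by (simp add: zero_less_mult_iff)
    hence "a^2*(pP + 2*q) > 0" unfolding apq .
    hence p2q: "pP + 2*q > 0" using a2 by (simp add: zero_less_mult_iff)
    have "(-1) ^ n * W a b c d n X < 0" if n: "n \<ge> 2" for n
    proof -
      have n1: "n \<ge> 1" using n by simp
      have "real n * q \<ge> 2 * q" using n qp by (intro mult_right_mono) auto
      hence "pP + real n * q > 0" using p2q by simp
      thus ?thesis unfolding WX[OF n1] using mpP[of n] by (simp add: mult_pos_pos)
    qed
    thus ?thesis using gB Wpos by auto
  qed
  note defs = X_def[symmetric] Y_def[symmetric]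
  have F1: "\<forall>n\<ge>1. (-1) ^ nat \<lceil>real n / 2\<rceil> * W a b c d n (xA a b) > 0
              \<and> (-1) ^ n * W a b c d n (xB c d) < 0 \<and> W a b c d n Y < 0"
    using WxA WxB WxDm by blast
  have F3: "\<forall>n\<ge>1. (DeltaD a b c d > Deltag a b c d \<and> real n > nplus a b c d \<longrightarrow> (-1) ^ n * W a b c d n X < 0)
           \<and> (DeltaD a b c d > Deltag a b c d \<and> real n = nplus a b c d \<longrightarrow> (-1) ^ n * W a b c d n X = 0)
           \<and> (\<not> (DeltaD a b c d > Deltag a b c d \<and> real n \<ge> nplus a b c d) \<longrightarrow> (-1) ^ n * W a b c d n X > 0)"
    using br1 br2 br3 unfolding E_def by auto
  have F23: "c \<le> cm a b d \<longrightarrow> X \<le> xgm a b c d \<and> xgm a b c d \<le> xgp a b c d \<and> xgp a b c d < 0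
        \<and> (\<forall>n\<ge>1. (-1) ^ n * W a b c d n (xgm a b c d) > 0
                  \<and> (-1) ^ n * W a b c d n (xgp a b c d) > 0)
        \<and> (\<forall>n\<ge>1. (DeltaD a b c d > Deltag a b c d \<and> real n > nplus a b c d \<longrightarrow> (-1) ^ n * W a b c d n X < 0)
           \<and> (DeltaD a b c d > Deltag a b c d \<and> real n = nplus a b c d \<longrightarrow> (-1) ^ n * W a b c d n X = 0)
           \<and> (\<not> (DeltaD a b c d > Deltag a b c d \<and> real n \<ge> nplus a b c d) \<longrightarrow> (-1) ^ n * W a b c d n X > 0))"
  proof
    assume "c \<le> cm a b d"
    from parti[OF this, unfolded defs] F3 show "X \<le> xgm a b c d \<and> xgm a b c d \<le> xgp a b c d \<and> xgp a b c d < 0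
        \<and> (\<forall>n\<ge>1. (-1) ^ n * W a b c d n (xgm a b c d) > 0
                  \<and> (-1) ^ n * W a b c d n (xgp a b c d) > 0)
        \<and> (\<forall>n\<ge>1. (DeltaD a b c d > Deltag a b c d \<and> real n > nplus a b c d \<longrightarrow> (-1) ^ n * W a b c d n X < 0)
           \<and> (DeltaD a b c d > Deltag a b c d \<and> real n = nplus a b c d \<longrightarrow> (-1) ^ n * W a b c d n X = 0)
           \<and> (\<not> (DeltaD a b c d > Deltag a b c d \<and> real n \<ge> nplus a b c d) \<longrightarrow> (-1) ^ n * W a b c d n X > 0))"
      by (elim conjE) (intro conjI)
  qed
  have F4: "c \<ge> cp a b d \<longrightarrow> xB c d < xgm a b c d
        \<and> (\<forall>n\<ge>1. W a b c d n (xgm a b c d) > 0 \<and> W a b c d n (xgp a b c d) > 0)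
        \<and> (\<forall>n\<ge>2. (-1) ^ n * W a b c d n X < 0)"
    using partii by (intro impI)
  have F4': "c \<ge> cp a b d \<longrightarrow> xB c d < xgm a b c d
        \<and> (\<forall>n\<ge>1. W a b c d n (xgm a b c d) > 0 \<and> W a b c d n (xgp a b c d) > 0)
        \<and> (\<forall>n\<ge>2. (-1) ^ n * W a b c d n X < 0)" using F4 .
  show ?thesis unfolding defs by (intro conjI 1 xA xB 2 3 AYpos AXneg F1 F23 F4')
qed
end
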